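(* Let $X=(X_1,\ldots,X_n)$ be a random vector with finitely many values, $Y$ a random variable with finitely many values (each with positive probability), and $L$ any partition lattice of $[n]$ with Möbius function $\mathfrak{m}$. If $X_1,\ldots,X_n$ are jointly independent given $Y$, then $$\ell_{1\cdots n}=\sum_{\pi\in L}\mathfrak{m}(\pi,[n])\prod_{B\in\pi}\mathbb{E}\Big[\prod_{i\in B}\mu_i^Y\Big],$$ i.e. $\ell_{1\cdots n}$ equals the $L$-cumulant of the random vector $(\mu_1^Y,\ldots,\mu_n^Y)$.
   Context: A partition lattice of $[n]$ is a subset of the set of set partitions of $[n]$ containing $[n]$ and $1|2|\cdots|n$ which is a lattice under refinement. $\mu_B=\mathbb{E}[\prod_{i\in B}X_i]$; $\ell_{1\cdots n}=\sum_{\pi\in L}\mathfrak{m}(\pi,[n])\prod_{B\in\pi}\mu_B$. $\mu_i^Y$ is the random variable $y\mapsto\mathbb{E}[X_i\mid Y=y]$. *)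

theory Defs
  imports "HOL-Probability.Probability" "HOL-Library.Disjoint_Sets"
begin

definition refines :: "'a set set \<Rightarrow> 'a set set \<Rightarrow> bool" where
  "refines p q \<longleftrightarrow> (\<forall>B\<in>p. \<exists>C\<in>q. B \<subseteq> C)"

definition partition_lattice :: "nat \<Rightarrow> nat set set set \<Rightarrow> bool" where
  "partition_lattice n L \<longleftrightarrow>
     L \<subseteq> {p. partition_on {1..n} p} \<and>
     {{1..n}} \<in> L \<and>
     {{i} | i. i \<in> {1..n}} \<in> L \<and>
     (\<forall>a\<in>L. \<forall>b\<in>L.
        (\<exists>c\<in>L. refines a c \<and> refines b c \<and>
              (\<forall>d\<in>L. refines a d \<and> refines b d \<longrightarrow> refines c d)) \<and>
        (\<exists>c\<in>L. refines c a \<and> refines c b \<and>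
              (\<forall>d\<in>L. refines d a \<and> refines d b \<longrightarrow> refines d c)))"

text \<open>Moebius function of the (finite) poset (L, refines): the inverse of the
  zeta function in the incidence algebra, i.e. the unique function m with
  m(x,y) = 0 unless x \<le> y and  sum_{x \<le> z \<le> y} m(x,z) = [x = y] for x \<le> y in L.\<close>
definition mobius :: "nat set set set \<Rightarrow> nat set set \<Rightarrow> nat set set \<Rightarrow> real" where
  "mobius L = (THE m. (\<forall>x\<in>L. \<forall>y\<in>L.
        (\<not> refines x y \<longrightarrow> m x y = 0) \<and>
        (refines x y \<longrightarrow>
           (\<Sum>z\<in>{z\<in>L. refines x z \<and> refines z y}. m x z) = (if x = y then 1 else 0)))
      \<and> (\<forall>x y. (x \<notin> L \<or> y \<notin> L) \<longrightarrow> m x y = 0))"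

definition cond_exp_at :: "'a measure \<Rightarrow> ('a \<Rightarrow> real) \<Rightarrow> ('a \<Rightarrow> 'b) \<Rightarrow> 'b \<Rightarrow> real" where
  "cond_exp_at M X Y y =
     (\<integral>\<omega>. X \<omega> * indicator {\<omega>\<in>space M. Y \<omega> = y} \<omega> \<partial>M) / measure M {\<omega>\<in>space M. Y \<omega> = y}"

end

theory Submission
  imports Defs
begin

lemma fin_range_integrable:
  fixes f :: "'a \<Rightarrow> real"
  assumes "finite_measure M" "f \<in> borel_measurable M" "finite (f ` space M)"
  shows "integrable M f"
proof -
  interpret finite_measure M by fact
  show ?thesis
  proof (rule integrable_const_bound[where B="\<Sum>v\<in>f ` space M. \<bar>v\<bar>"])
    show "AE x in M. norm (f x) \<le> (\<Sum>v\<in>f ` space M. \<bar>v\<bar>)"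
    proof (rule AE_I2)
      fix x assume "x \<in> space M"
      then show "norm (f x) \<le> (\<Sum>v\<in>f ` space M. \<bar>v\<bar>)"
        using member_le_sum[of "f x" "f ` space M" abs] assms(3) by auto
    qed
  qed fact
qed

lemma integral_uniform_real:
  fixes g :: "'a \<Rightarrow> real"
  assumes "finite_measure M" "A \<in> sets M" "measure M A > 0" "g \<in> borel_measurable M"
  shows "(\<integral>x. g x \<partial>uniform_measure M A) = (\<integral>x. g x * indicator A x \<partial>M) / measure M A"
proof -
  interpret finite_measure M by fact
  have e: "emeasure M A = ennreal (measure M A)" by (simp add: emeasure_eq_measure)
  have d1: "1 / ennreal (measure M A) = ennreal (1 / measure M A)"
    using assms(3) by (metis divide_ennreal ennreal_1 zero_le_one)
  have "uniform_measure M A = density M (\<lambda>x. ennreal (indicator A x / measure M A))"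
    unfolding uniform_measure_def e
    by (intro density_cong) (use assms in \<open>auto simp: d1 indicator_def\<close>)
  then have "(\<integral>x. g x \<partial>uniform_measure M A) = (\<integral>x. (indicator A x / measure M A) *\<^sub>R g x \<partial>M)"
    using assms by (simp add: integral_density)
  also have "\<dots> = (\<integral>x. g x * indicator A x \<partial>M) / measure M A"
    by (simp add: mult.commute)
  finally show ?thesis .
qed

theorem proposition5p9:
  fixes M :: "'a measure" and n :: nat and L :: "nat set set set"
    and X :: "nat \<Rightarrow> 'a \<Rightarrow> real" and Y :: "'a \<Rightarrow> 'b"
  assumes "prob_space M"
    and "\<And>i. i \<in> {1..n} \<Longrightarrow> X i \<in> borel_measurable M"
    and "\<And>i. i \<in> {1..n} \<Longrightarrow> finite (X i ` space M)"
    and "Y \<in> measurable M (count_space UNIV)"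
    and "finite (Y ` space M)"
    and "\<And>y. y \<in> Y ` space M \<Longrightarrow> measure M {\<omega>\<in>space M. Y \<omega> = y} > 0"
    and "partition_lattice n L"
    and "\<And>y. y \<in> Y ` space M \<Longrightarrow>
           prob_space.indep_vars (uniform_measure M {\<omega>\<in>space M. Y \<omega> = y})
             (\<lambda>_. borel) X {1..n}"
  shows "(\<Sum>p\<in>L. mobius L p {{1..n}} * (\<Prod>B\<in>p. \<integral>\<omega>. (\<Prod>i\<in>B. X i \<omega>) \<partial>M))
       = (\<Sum>p\<in>L. mobius L p {{1..n}} *
            (\<Prod>B\<in>p. \<integral>\<omega>. (\<Prod>i\<in>B. cond_exp_at M (X i) Y (Y \<omega>)) \<partial>M))"
proof -
  interpret prob_space M by fact
  define S where "S = Y ` space M"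
  define A where "A y = {\<omega>\<in>space M. Y \<omega> = y}" for y
  define c where "c i y = cond_exp_at M (X i) Y y" for i y
  have Asets: "A y \<in> sets M" for y
  proof -
    have "A y = Y -` {y} \<inter> space M" by (auto simp: A_def)
    thus ?thesis using measurable_sets[OF assms(4), of "{y}"] by simp
  qed
  have Ypos: "y \<in> S \<Longrightarrow> measure M (A y) > 0" for y using assms(6) by (simp add: S_def A_def)
  have finS: "finite S" using assms(5) by (simp add: S_def)
  have decomp: "(\<integral>\<omega>. h \<omega> \<partial>M) = (\<Sum>y\<in>S. \<integral>\<omega>. h \<omega> * indicator (A y) \<omega> \<partial>M)"
    if hi: "integrable M h" for h :: "'a \<Rightarrow> real"
  proof -
    have "(\<integral>\<omega>. h \<omega> \<partial>M) = (\<integral>\<omega>. (\<Sum>y\<in>S. h \<omega> * indicator (A y) \<omega>) \<partial>M)"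
    proof (rule Bochner_Integration.integral_cong[OF refl])
      fix \<omega> assume w: "\<omega> \<in> space M"
      have "(\<Sum>y\<in>S. h \<omega> * indicator (A y) \<omega>) = (\<Sum>y\<in>{Y \<omega>}. h \<omega> * indicator (A y) \<omega>)"
        by (rule sum.mono_neutral_right) (use w finS in \<open>auto simp: S_def A_def split: split_indicator\<close>)
      also have "\<dots> = h \<omega>" using w by (simp add: A_def)
      finally show "h \<omega> = (\<Sum>y\<in>S. h \<omega> * indicator (A y) \<omega>)" by simp
    qed
    also have "\<dots> = (\<Sum>y\<in>S. \<integral>\<omega>. h \<omega> * indicator (A y) \<omega> \<partial>M)"
      by (rule Bochner_Integration.integral_sum) (use hi Asets in \<open>auto intro: integrable_real_mult_indicator\<close>)
    finally show ?thesis .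
  qed
  have key: "(\<integral>\<omega>. (\<Prod>i\<in>B. X i \<omega>) \<partial>M) = (\<integral>\<omega>. (\<Prod>i\<in>B. c i (Y \<omega>)) \<partial>M)"
    if B: "B \<subseteq> {1..n}" for B
  proof -
    have finB: "finite B" using B finite_subset by blast
    have Xm: "i \<in> B \<Longrightarrow> X i \<in> borel_measurable M" for i using B assms(2) by auto
    have Xf: "i \<in> B \<Longrightarrow> finite (X i ` space M)" for i using B assms(3) by auto
    have cYm: "(\<lambda>\<omega>. g (Y \<omega>)) \<in> borel_measurable M" for g :: "'b \<Rightarrow> real"
      using measurable_compose[OF assms(4), of g borel] by simp
    have int1: "integrable M (\<lambda>\<omega>. \<Prod>i\<in>B. X i \<omega>)"
    proof (rule fin_range_integrable)
      show "finite_measure M" by unfold_locales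
      show "(\<lambda>\<omega>. \<Prod>i\<in>B. X i \<omega>) \<in> borel_measurable M" using Xm by measurable
      have "(\<lambda>\<omega>. \<Prod>i\<in>B. X i \<omega>) ` space M \<subseteq> (\<lambda>f. \<Prod>i\<in>B. f i) ` (\<Pi>\<^sub>E i\<in>B. X i ` space M)"
      proof
        fix v assume "v \<in> (\<lambda>\<omega>. \<Prod>i\<in>B. X i \<omega>) ` space M"
        then obtain \<omega> where w: "\<omega> \<in> space M" "v = (\<Prod>i\<in>B. X i \<omega>)" by auto
        show "v \<in> (\<lambda>f. \<Prod>i\<in>B. f i) ` (\<Pi>\<^sub>E i\<in>B. X i ` space M)"
          by (rule image_eqI[where x="restrict (\<lambda>i. X i \<omega>) B"]) (use w in auto)
      qed
      moreover have "finite (\<Pi>\<^sub>E i\<in>B. X i ` space M)" using finB Xf by (intro finite_PiE) auto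
      ultimately show "finite ((\<lambda>\<omega>. \<Prod>i\<in>B. X i \<omega>) ` space M)" by (meson finite_imageI finite_subset)
    qed
    have int2: "integrable M (\<lambda>\<omega>. \<Prod>i\<in>B. c i (Y \<omega>))"
    proof (rule fin_range_integrable)
      show "finite_measure M" by unfold_locales
      show "(\<lambda>\<omega>. \<Prod>i\<in>B. c i (Y \<omega>)) \<in> borel_measurable M" using cYm[of "\<lambda>y. \<Prod>i\<in>B. c i y"] by simp
      have "(\<lambda>\<omega>. \<Prod>i\<in>B. c i (Y \<omega>)) ` space M = (\<lambda>y. \<Prod>i\<in>B. c i y) ` S" by (auto simp: S_def)
      then show "finite ((\<lambda>\<omega>. \<Prod>i\<in>B. c i (Y \<omega>)) ` space M)" using finS by simp
    qed
    have blk: "(\<integral>\<omega>. (\<Prod>i\<in>B. X i \<omega>) * indicator (A y) \<omega> \<partial>M)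
             = (\<integral>\<omega>. (\<Prod>i\<in>B. c i (Y \<omega>)) * indicator (A y) \<omega> \<partial>M)" if y: "y \<in> S" for y
    proof -
      let ?U = "uniform_measure M (A y)"
      have m: "measure M (A y) > 0" using Ypos y .
      have em: "emeasure M (A y) \<noteq> 0" "emeasure M (A y) \<noteq> \<infinity>"
        using m by (auto simp: emeasure_eq_measure)
      interpret U: prob_space ?U by (rule prob_space_uniform_measure[OF em])
      have fmM: "finite_measure M" by unfold_locales
      have ind: "U.indep_vars (\<lambda>_. borel) X B"
        using U.indep_vars_subset[OF assms(8)[of y, folded A_def] B] y by (simp add: S_def)
      have XmU: "i \<in> B \<Longrightarrow> X i \<in> borel_measurable ?U" for i
        using Xm[of i] by (simp cong: measurable_cong_sets)
      have intU: "i \<in> B \<Longrightarrow> integrable ?U (X i)" for i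
        by (rule fin_range_integrable) (use XmU Xf in \<open>auto intro: U.finite_measure_axioms\<close>)
      have "(\<integral>\<omega>. (\<Prod>i\<in>B. X i \<omega>) * indicator (A y) \<omega> \<partial>M)
          = measure M (A y) * (\<integral>\<omega>. (\<Prod>i\<in>B. X i \<omega>) \<partial>?U)"
        using integral_uniform_real[OF fmM Asets m, of "\<lambda>\<omega>. \<Prod>i\<in>B. X i \<omega>"] m Xm
        by (simp add: borel_measurable_prod)
      also have "(\<integral>\<omega>. (\<Prod>i\<in>B. X i \<omega>) \<partial>?U) = (\<Prod>i\<in>B. \<integral>\<omega>. X i \<omega> \<partial>?U)"
        by (rule U.indep_vars_lebesgue_integral[OF finB ind intU])
      also have "\<dots> = (\<Prod>i\<in>B. c i y)"
      proof (rule prod.cong[OF refl])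
        fix i assume "i \<in> B"
        then show "(\<integral>\<omega>. X i \<omega> \<partial>?U) = c i y"
          using integral_uniform_real[OF fmM Asets m Xm] by (simp add: c_def cond_exp_at_def A_def)
      qed
      finally have L1: "(\<integral>\<omega>. (\<Prod>i\<in>B. X i \<omega>) * indicator (A y) \<omega> \<partial>M) = measure M (A y) * (\<Prod>i\<in>B. c i y)" .
      have "(\<integral>\<omega>. (\<Prod>i\<in>B. c i (Y \<omega>)) * indicator (A y) \<omega> \<partial>M)
           = (\<integral>\<omega>. (\<Prod>i\<in>B. c i y) * indicator (A y) \<omega> \<partial>M)"
        by (rule Bochner_Integration.integral_cong[OF refl]) (auto simp: A_def indicator_def)
      also have "\<dots> = (\<Prod>i\<in>B. c i y) * measure M (A y)"
        using Asets by simp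
      finally show ?thesis using L1 by simp
    qed
    show ?thesis
      using decomp[OF int1] decomp[OF int2] blk by simp
  qed
  show ?thesis
  proof (rule sum.cong[OF refl])
    fix p assume "p \<in> L"
    then have "partition_on {1..n} p" using assms(7) by (auto simp: partition_lattice_def)
    then have sub: "B \<in> p \<Longrightarrow> B \<subseteq> {1..n}" for B by (auto simp: partition_on_def)
    show "mobius L p {{1..n}} * (\<Prod>B\<in>p. \<integral>\<omega>. (\<Prod>i\<in>B. X i \<omega>) \<partial>M) =
          mobius L p {{1..n}} * (\<Prod>B\<in>p. \<integral>\<omega>. (\<Prod>i\<in>B. cond_exp_at M (X i) Y (Y \<omega>)) \<partial>M)"
      using key[OF sub] by (simp add: c_def)
  qed
qed

end
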